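(* Let $(X_n)_{n\in\mathbb{T}}$ ($\mathbb{T}$ one of $\mathbb{Z},\mathbb{N},\mathbb{N}\setminus\{0\}$) be a stationary, $(\mathbb{L}_\infty,\Psi)$-weakly dependent sequence of $\mathbb{R}^d$-valued random variables such that $X_1$ is supported on a compact set $\mathbb{M}$. Then for any $\epsilon>0$ and any sequences of positive integers $k_n,r_n$ with $k_nr_n\le n$, $$\mathbb{P}\big(d_H(\mathbb{X}_n,\mathbb{M})>\epsilon\big)\le\frac{k_n^2\Psi(r_n)+k_n\exp\big(-[\tfrac{k_n}{2}]\rho_{r_n}(\epsilon/2)\big)}{k_n\rho_{r_n}(\epsilon/4)}.$$ Suppose moreover that for some $b>1$ and every sufficiently small $\epsilon>0$, $$\lim_{m\to\infty}\rho_m(\epsilon)\frac{e^{m^{b}}}{m^{1+b}}=\infty\quad\text{and}\quad\lim_{m\to\infty}\frac{e^{2m^{b}}}{m^2}\Psi(m)=0.$$ Then $(X_n)_{n\in\mathbb{T}}$ is asymptotically $(\epsilon,\alpha)$-dense in $\mathbb{M}$.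
   Context: The sequence is $(\mathbb{L}_\infty,\Psi)$-weakly dependent if there is a non-increasing function $\Psi$ with $\Psi(r)\to0$ as $r\to\infty$ such that for all bounded measurable (nonzero) $f,g$ and all indices $i_1\le\cdots\le i_k<i_k+r\le i_{k+1}\le\cdots\le i_n$, $\big|\mathrm{Cov}\big(f(X_{i_1},\ldots,X_{i_k})/\|f\|_\infty,\ g(X_{i_{k+1}},\ldots,X_{i_n})/\|g\|_\infty\big)\big|\le\Psi(r)$. $\mathbb{X}_n=\{X_1,\ldots,X_n\}$; $[\cdot]$ is the integer part. For $p\ge1$, $\rho_p(\epsilon)=\inf_{x\in\mathbb{M}_{dp}}\mathbb{P}(\|(X_1,\ldots,X_p)^t-x\|\le\epsilon)$, with $\mathbb{M}_{dp}$ the support of $(X_1,\ldots,X_p)^t$. $d_H$ is the Hausdorff distance. The sequence is asymptotically $(\epsilon,\alpha)$-dense in $\mathbb{M}$ if for every sufficiently small $\epsilon>0$ and every $\alpha\in(0,1)$ there is $n_0$ with $\mathbb{P}(d_H(\mathbb{X}_n,\mathbb{M})\le\epsilon)\ge1-\alpha$ for all $n\ge n_0$. *)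

theory Defs
  imports "HOL-Probability.Probability"
begin

definition hausdorff_dist :: "'a::metric_space set \<Rightarrow> 'a set \<Rightarrow> real" where
  "hausdorff_dist S T = max (SUP x\<in>S. infdist x T) (SUP y\<in>T. infdist y S)"

definition sample_set :: "(int \<Rightarrow> 'w \<Rightarrow> 'b) \<Rightarrow> nat \<Rightarrow> 'w \<Rightarrow> 'b set" where
  "sample_set X n w = {X (int t) w | t. t \<in> {1..n}}"

definition rv_support :: "'w measure \<Rightarrow> ('w \<Rightarrow> 'b::metric_space) \<Rightarrow> 'b set" where
  "rv_support M Y = {x. \<forall>e>0. measure M {w \<in> space M. dist (Y w) x < e} > 0}"

definition block_dist :: "(int \<Rightarrow> 'w \<Rightarrow> 'b::euclidean_space) \<Rightarrow> nat \<Rightarrow> (nat \<Rightarrow> 'b) \<Rightarrow> 'w \<Rightarrow> real" where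
  "block_dist X p x w = sqrt (\<Sum>i<p. (norm (X (int i + 1) w - x i))\<^sup>2)"

definition block_support :: "'w measure \<Rightarrow> (int \<Rightarrow> 'w \<Rightarrow> 'b::euclidean_space) \<Rightarrow> nat \<Rightarrow> (nat \<Rightarrow> 'b) set" where
  "block_support M X p = {x. (\<forall>i\<ge>p. x i = 0) \<and>
      (\<forall>e>0. measure M {w \<in> space M. block_dist X p x w < e} > 0)}"

definition rho :: "'w measure \<Rightarrow> (int \<Rightarrow> 'w \<Rightarrow> 'b::euclidean_space) \<Rightarrow> nat \<Rightarrow> real \<Rightarrow> real" where
  "rho M X p eps = (INF x\<in>block_support M X p. measure M {w \<in> space M. block_dist X p x w \<le> eps})"

definition stationary_on :: "'w measure \<Rightarrow> int set \<Rightarrow> (int \<Rightarrow> 'w \<Rightarrow> 'b::topological_space) \<Rightarrow> bool" where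
  "stationary_on M T X \<longleftrightarrow>
    (\<forall>(n::nat) (i::nat \<Rightarrow> int) (h::int).
       (\<forall>j<n. i j \<in> T \<and> i j + h \<in> T) \<longrightarrow>
       distr M (PiM {..<n} (\<lambda>_. borel)) (\<lambda>w. \<lambda>j\<in>{..<n}. X (i j) w) =
       distr M (PiM {..<n} (\<lambda>_. borel)) (\<lambda>w. \<lambda>j\<in>{..<n}. X (i j + h) w))"

definition sup_norm :: "'a measure \<Rightarrow> ('a \<Rightarrow> real) \<Rightarrow> real" where
  "sup_norm N f = (SUP x\<in>space N. \<bar>f x\<bar>)"

definition cov :: "'w measure \<Rightarrow> ('w \<Rightarrow> real) \<Rightarrow> ('w \<Rightarrow> real) \<Rightarrow> real" where
  "cov M U V = (\<integral>w. U w * V w \<partial>M) - (\<integral>w. U w \<partial>M) * (\<integral>w. V w \<partial>M)"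

definition weakly_dependent_on ::
  "'w measure \<Rightarrow> int set \<Rightarrow> (int \<Rightarrow> 'w \<Rightarrow> 'b::topological_space) \<Rightarrow> (nat \<Rightarrow> real) \<Rightarrow> bool" where
  "weakly_dependent_on M T X \<Psi> \<longleftrightarrow>
    antimono \<Psi> \<and> \<Psi> \<longlonglongrightarrow> 0 \<and>
    (\<forall>(k::nat) (l::nat) (i::nat \<Rightarrow> int) (j::nat \<Rightarrow> int) (r::nat)
       (f::(nat \<Rightarrow> 'b) \<Rightarrow> real) (g::(nat \<Rightarrow> 'b) \<Rightarrow> real).
       k \<ge> 1 \<and> l \<ge> 1 \<and> r \<ge> 1 \<and>
       (\<forall>a<k. i a \<in> T) \<and> (\<forall>a<l. j a \<in> T) \<and>
       (\<forall>a. Suc a < k \<longrightarrow> i a \<le> i (Suc a)) \<and>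
       (\<forall>a. Suc a < l \<longrightarrow> j a \<le> j (Suc a)) \<and>
       i (k - 1) + int r \<le> j 0 \<and>
       f \<in> borel_measurable (PiM {..<k} (\<lambda>_. borel)) \<and>
       g \<in> borel_measurable (PiM {..<l} (\<lambda>_. borel)) \<and>
       bounded (f ` space (PiM {..<k} (\<lambda>_. borel))) \<and>
       bounded (g ` space (PiM {..<l} (\<lambda>_. borel))) \<and>
       (\<exists>x\<in>space (PiM {..<k} (\<lambda>_. borel)). f x \<noteq> 0) \<and>
       (\<exists>y\<in>space (PiM {..<l} (\<lambda>_. borel)). g y \<noteq> 0)
     \<longrightarrow>
       \<bar>cov M (\<lambda>w. f (\<lambda>a\<in>{..<k}. X (i a) w) / sup_norm (PiM {..<k} (\<lambda>_. borel)) f)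
               (\<lambda>w. g (\<lambda>a\<in>{..<l}. X (j a) w) / sup_norm (PiM {..<l} (\<lambda>_. borel)) g)\<bar>
       \<le> \<Psi> r)"

definition asymp_dense :: "'w measure \<Rightarrow> (int \<Rightarrow> 'w \<Rightarrow> 'b::metric_space) \<Rightarrow> 'b set \<Rightarrow> bool" where
  "asymp_dense M X S \<longleftrightarrow>
    (\<exists>e0>0. \<forall>eps. 0 < eps \<and> eps < e0 \<longrightarrow>
       (\<forall>\<alpha>. 0 < \<alpha> \<and> \<alpha> < 1 \<longrightarrow>
          (\<exists>n0. \<forall>n\<ge>n0.
             measure M {w \<in> space M. hausdorff_dist (sample_set X n w) S \<le> eps} \<ge> 1 - \<alpha>)))"

end

theory Submission
  imports Defs
begin

lemma null_cover:
  fixes Y :: "'w \<Rightarrow> 'c::second_countable_topology"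
  assumes "\<And>x. x \<in> Z \<Longrightarrow> \<exists>U. open U \<and> x \<in> U \<and> {w\<in>space M. Y w \<in> U} \<in> null_sets M"
  shows "\<exists>N\<in>null_sets M. {w\<in>space M. Y w \<in> Z} \<subseteq> N"
proof -
  obtain Uf where Uf: "\<And>x. x \<in> Z \<Longrightarrow> open (Uf x) \<and> x \<in> Uf x \<and> {w\<in>space M. Y w \<in> Uf x} \<in> null_sets M"
    using assms by metis
  obtain F' where F': "F' \<subseteq> Uf ` Z" "countable F'" "\<Union>F' = \<Union>(Uf ` Z)"
    using Lindelof[of "Uf ` Z"] Uf by blast
  define N where "N = (\<Union>U\<in>F'. {w\<in>space M. Y w \<in> U})"
  have "N \<in> null_sets M"
    unfolding N_def
  proof (rule null_sets_UN')
    show "countable F'" by fact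
    fix U assume "U \<in> F'"
    then obtain x where "x \<in> Z" "U = Uf x" using F' by blast
    then show "{w\<in>space M. Y w \<in> U} \<in> null_sets M" using Uf by blast
  qed
  moreover have "{w\<in>space M. Y w \<in> Z} \<subseteq> N"
  proof
    fix w assume w: "w \<in> {w\<in>space M. Y w \<in> Z}"
    then have "Y w \<in> \<Union>F'" using F'(3) Uf by blast
    then show "w \<in> N" using w unfolding N_def by blast
  qed
  ultimately show ?thesis by blast
qed

lemma comp_meas: "(q::nat) < m \<Longrightarrow> i < r \<Longrightarrow> (\<lambda>z. z (q*r+i)) \<in> measurable (PiM {..<m*r} (\<lambda>_. borel)) (borel :: 'b::euclidean_space measure)"
proof (rule measurable_component_singleton)
  assume "q < m" "i < r"
  then have "Suc q * r \<le> m * r" by (intro mult_le_mono1) simp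
  then show "q*r+i \<in> {..<m*r}" using \<open>i < r\<close> by simp
qed

lemma L2_block_meas: "(q::nat) < m \<Longrightarrow> (\<lambda>z. L2_set (\<lambda>i. norm (z (q*r+i) - (y i::'b::euclidean_space))) {..<r}) \<in> borel_measurable (PiM {..<m*r} (\<lambda>_. borel))"
  unfolding L2_set_def
  apply (rule measurable_compose[OF _ borel_measurable_sqrt])
  apply (rule borel_measurable_sum)
  apply (rule borel_measurable_power)
  apply (rule measurable_compose[OF _ borel_measurable_norm])
  apply (rule borel_measurable_diff)
   apply (rule comp_meas)
    apply auto
  done

lemma sup_norm_01:
  assumes "\<And>x. f x = 0 \<or> f x = 1" "\<exists>x\<in>space N. f x \<noteq> 0"
  shows "sup_norm N f = 1"
  unfolding sup_norm_def
proof (rule cSup_eq_maximum)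
  obtain x where "x \<in> space N" "f x \<noteq> 0" using assms(2) by blast
  then have "f x = 1" using assms(1) by metis
  then show "1 \<in> (\<lambda>x. \<bar>f x\<bar>) ` space N" using \<open>x \<in> space N\<close> by force
next
  fix z assume "z \<in> (\<lambda>x. \<bar>f x\<bar>) ` space N"
  then obtain x where "z = \<bar>f x\<bar>" by blast
  then show "z \<le> 1" using assms(1)[of x] by auto
qed

lemma infdist_le_iff_finite:
  fixes F :: "'a::heine_borel set"
  assumes "finite F" "F \<noteq> {}"
  shows "infdist y F \<le> e \<longleftrightarrow> (\<exists>x\<in>F. dist y x \<le> e)"
proof
  assume "infdist y F \<le> e"
  moreover obtain x where "x \<in> F" "infdist y F = dist y x"
    using infdist_attains_inf[OF finite_imp_closed[OF assms(1)] assms(2)] by blast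
  ultimately show "\<exists>x\<in>F. dist y x \<le> e" by auto
next
  assume "\<exists>x\<in>F. dist y x \<le> e"
  then show "infdist y F \<le> e" using infdist_le order_trans by blast
qed

lemma haus_le_iff:
  fixes F S :: "'a::euclidean_space set"
  assumes F: "finite F" "F \<noteq> {}" and S: "compact S" "S \<noteq> {}" and D: "D \<subseteq> S" "S \<subseteq> closure D"
  shows "hausdorff_dist F S \<le> e \<longleftrightarrow> (\<forall>x\<in>F. infdist x S \<le> e) \<and> (\<forall>y\<in>D. \<exists>x\<in>F. dist y x \<le> e)"
proof -
  have b1: "bdd_above ((\<lambda>x. infdist x S) ` F)" using F(1) by simp
  obtain x0 where x0: "x0 \<in> F" using F(2) by blast
  obtain B where B: "\<And>x. x \<in> S \<Longrightarrow> norm x \<le> B" using compact_imp_bounded[OF S(1)] unfolding bounded_iff by blast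
  have b2: "bdd_above ((\<lambda>y. infdist y F) ` S)"
  proof (rule bdd_aboveI2)
    fix y assume "y \<in> S"
    have "infdist y F \<le> dist y x0" using x0 by (rule infdist_le)
    also have "\<dots> \<le> norm y + norm x0" by (simp add: dist_norm norm_triangle_ineq4)
    also have "\<dots> \<le> B + norm x0" using B \<open>y \<in> S\<close> by simp
    finally show "infdist y F \<le> B + norm x0" .
  qed
  have e1: "(SUP x\<in>F. infdist x S) \<le> e \<longleftrightarrow> (\<forall>x\<in>F. infdist x S \<le> e)"
    using F(2) b1 by (rule cSUP_le_iff)
  have e2: "(SUP y\<in>S. infdist y F) \<le> e \<longleftrightarrow> (\<forall>y\<in>S. infdist y F \<le> e)"
    using S(2) b2 by (rule cSUP_le_iff)
  have e3: "(\<forall>y\<in>S. infdist y F \<le> e) \<longleftrightarrow> (\<forall>y\<in>D. infdist y F \<le> e)"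
  proof
    assume "\<forall>y\<in>S. infdist y F \<le> e" then show "\<forall>y\<in>D. infdist y F \<le> e" using D(1) by blast
  next
    assume a: "\<forall>y\<in>D. infdist y F \<le> e"
    have "closed {y. infdist y F \<le> e}"
      by (intro closed_Collect_le continuous_on_infdist continuous_on_id continuous_on_const)
    then have "closure D \<subseteq> {y. infdist y F \<le> e}" using a by (intro closure_minimal) auto
    then show "\<forall>y\<in>S. infdist y F \<le> e" using D(2) by blast
  qed
  show ?thesis unfolding hausdorff_dist_def max.bounded_iff e1 e2 e3
    using infdist_le_iff_finite[OF F] by simp
qed

locale wsetting = prob_space M for M :: "'w measure" +
  fixes X :: "int \<Rightarrow> 'w \<Rightarrow> 'b::euclidean_space" and T :: "int set" and \<Psi> :: "nat \<Rightarrow> real"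
  assumes T1: "\<And>t. t \<ge> 1 \<Longrightarrow> t \<in> T"
    and XmT: "\<And>t. t \<in> T \<Longrightarrow> X t \<in> borel_measurable M"
    and stat: "stationary_on M T X"
    and wd: "weakly_dependent_on M T X \<Psi>"
begin

lemma Xm[measurable]: "X (int j + 1) \<in> borel_measurable M"
  using XmT T1 by simp

definition bd :: "nat \<Rightarrow> nat \<Rightarrow> (nat \<Rightarrow> 'b) \<Rightarrow> 'w \<Rightarrow> real" where
  "bd s r y w = L2_set (\<lambda>i. norm (X (int (s + i) + 1) w - y i)) {..<r}"

lemma bd_meas[measurable]: "(\<lambda>w. bd s r y w) \<in> borel_measurable M"
  unfolding bd_def L2_set_def by measurable

lemma block_dist_bd: "block_dist X r y w = bd 0 r y w"
  unfolding block_dist_def bd_def L2_set_def by simp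

lemma Psi_nonneg: "\<Psi> r \<ge> 0"
  using wd unfolding weakly_dependent_on_def using decseq_ge by blast

lemma stat_gen:
  assumes B: "B \<in> sets (PiM {..<r} (\<lambda>_. borel))"
  shows "measure M {w\<in>space M. (\<lambda>j\<in>{..<r}. X (int (s + j) + 1) w) \<in> B}
       = measure M {w\<in>space M. (\<lambda>j\<in>{..<r}. X (int j + 1) w) \<in> B}"
proof -
  have eq: "distr M (PiM {..<r} (\<lambda>_. borel)) (\<lambda>w. \<lambda>j\<in>{..<r}. X (int j + 1) w) =
       distr M (PiM {..<r} (\<lambda>_. borel)) (\<lambda>w. \<lambda>j\<in>{..<r}. X (int j + 1 + int s) w)"
  proof -
    have A: "\<forall>j<r. int j + 1 \<in> T \<and> int j + 1 + int s \<in> T" using T1 by simp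
    have B: "\<forall>(n::nat) (i::nat \<Rightarrow> int) (h::int).
       (\<forall>j<n. i j \<in> T \<and> i j + h \<in> T) \<longrightarrow>
       distr M (PiM {..<n} (\<lambda>_. borel)) (\<lambda>w. \<lambda>j\<in>{..<n}. X (i j) w) =
       distr M (PiM {..<n} (\<lambda>_. borel)) (\<lambda>w. \<lambda>j\<in>{..<n}. X (i j + h) w)"
      using stat unfolding stationary_on_def by blast
    show ?thesis using B[rule_format, of r "\<lambda>j. int j + 1" "int s"] A by blast
  qed
  have m1: "(\<lambda>w. \<lambda>j\<in>{..<r}. X (int j + 1) w) \<in> measurable M (PiM {..<r} (\<lambda>_. borel))"
    by measurable
  have e2: "(\<lambda>w. \<lambda>j\<in>{..<r}. X (int j + 1 + int s) w) = (\<lambda>w. \<lambda>j\<in>{..<r}. X (int (s + j) + 1) w)"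
    by (auto simp: algebra_simps)
  have m2: "(\<lambda>w. \<lambda>j\<in>{..<r}. X (int (s + j) + 1) w) \<in> measurable M (PiM {..<r} (\<lambda>_. borel))"
    by measurable
  have "measure (distr M (PiM {..<r} (\<lambda>_. borel)) (\<lambda>w. \<lambda>j\<in>{..<r}. X (int j + 1) w)) B
     = measure M ((\<lambda>w. \<lambda>j\<in>{..<r}. X (int j + 1) w) -` B \<inter> space M)"
    using m1 B by (rule measure_distr)
  moreover have "measure (distr M (PiM {..<r} (\<lambda>_. borel)) (\<lambda>w. \<lambda>j\<in>{..<r}. X (int (s + j) + 1) w)) B
     = measure M ((\<lambda>w. \<lambda>j\<in>{..<r}. X (int (s + j) + 1) w) -` B \<inter> space M)"
    using m2 B by (rule measure_distr)
  moreover have "(\<lambda>w. \<lambda>j\<in>{..<r}. X (int j + 1) w) -` B \<inter> space M = {w\<in>space M. (\<lambda>j\<in>{..<r}. X (int j + 1) w) \<in> B}"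
    by blast
  moreover have "(\<lambda>w. \<lambda>j\<in>{..<r}. X (int (s + j) + 1) w) -` B \<inter> space M = {w\<in>space M. (\<lambda>j\<in>{..<r}. X (int (s + j) + 1) w) \<in> B}"
    by blast
  ultimately show ?thesis using eq e2 by simp
qed

lemma stat_bd:
  "measure M {w\<in>space M. bd s r y w \<le> c} = measure M {w\<in>space M. bd 0 r y w \<le> c}"
  "measure M {w\<in>space M. bd s r y w > c} = measure M {w\<in>space M. bd 0 r y w > c}"
proof -
  define \<Phi> where "\<Phi> z = L2_set (\<lambda>i. norm (z i - y i)) {..<r}" for z :: "nat \<Rightarrow> 'b"
  have mP: "\<Phi> \<in> borel_measurable (PiM {..<r} (\<lambda>_. borel))"
    unfolding \<Phi>_def L2_set_def by measurable
  have e: "\<Phi> (\<lambda>j\<in>{..<r}. X (int (s' + j) + 1) w) = bd s' r y w" for s' w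
    unfolding \<Phi>_def bd_def by (intro L2_set_cong) auto
  have B1: "{z\<in>space (PiM {..<r} (\<lambda>_. borel)). \<Phi> z \<le> c} \<in> sets (PiM {..<r} (\<lambda>_. borel))"
    using mP by measurable
  have B2: "{z\<in>space (PiM {..<r} (\<lambda>_. borel)). \<Phi> z > c} \<in> sets (PiM {..<r} (\<lambda>_. borel))"
    using mP by measurable
  have sp: "(\<lambda>j\<in>{..<r}. X (int (s' + j) + 1) w) \<in> space (PiM {..<r} (\<lambda>_. borel))" for s' w
    by (simp add: space_PiM)
  show "measure M {w\<in>space M. bd s r y w \<le> c} = measure M {w\<in>space M. bd 0 r y w \<le> c}"
    using stat_gen[OF B1, of s] stat_gen[OF B1, of 0] by (simp only: mem_Collect_eq sp e simp_thms)
  show "measure M {w\<in>space M. bd s r y w > c} = measure M {w\<in>space M. bd 0 r y w > c}"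
    using stat_gen[OF B2, of s] stat_gen[OF B2, of 0] by (simp only: mem_Collect_eq sp e simp_thms)
qed

lemma stat_ball:
  "measure M {w\<in>space M. dist (X (int s + 1) w) x < e} = measure M {w\<in>space M. dist (X 1 w) x < e}"
proof -
  have B: "{z\<in>space (PiM {..<Suc 0} (\<lambda>_. borel)). dist (z 0) x < e} \<in> sets (PiM {..<Suc 0} (\<lambda>_. borel))"
    by measurable
  have sp: "(\<lambda>j\<in>{..<Suc 0}. X (int (s' + j) + 1) w) \<in> space (PiM {..<Suc 0} (\<lambda>_. borel))" for s' w
    by (simp add: space_PiM)
  show ?thesis
  proof -
    have "\<And>s' w. (\<lambda>j\<in>{..<Suc 0}. X (int s' + int j + 1) w) \<in> space (PiM {..<Suc 0} (\<lambda>_. borel))"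
      by (simp add: space_PiM)
    moreover have "\<And>w. (\<lambda>j\<in>{..<Suc 0}. X (int j + 1) w) \<in> space (PiM {..<Suc 0} (\<lambda>_. borel))"
      by (simp add: space_PiM)
    ultimately show ?thesis using stat_gen[OF B, of s] by simp
  qed
qed

lemma X_in_S:
  assumes "t \<ge> 1"
  shows "\<exists>N\<in>null_sets M. {w\<in>space M. X t w \<notin> rv_support M (X 1)} \<subseteq> N"
proof -
  have "\<exists>N\<in>null_sets M. {w\<in>space M. X t w \<in> - rv_support M (X 1)} \<subseteq> N"
  proof (rule null_cover)
  fix x assume "x \<in> - rv_support M (X 1)"
  then obtain e where e: "e > 0" "\<not> measure M {w\<in>space M. dist (X 1 w) x < e} > 0"
    unfolding rv_support_def by auto
  obtain s where s: "t = int s + 1" using assms by (metis add.commute int_ge_induct zle_iff_zadd)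
  have m0: "measure M {w\<in>space M. dist (X t w) x < e} = 0"
    using e(2) stat_ball[of s x e] s by (simp add: measure_nonneg order.antisym)
  have "{w\<in>space M. X t w \<in> ball x e} \<in> null_sets M"
  proof -
    have "{w\<in>space M. X t w \<in> ball x e} = {w\<in>space M. dist (X t w) x < e}"
      by (auto simp: dist_commute)
    moreover have "{w\<in>space M. dist (X t w) x < e} \<in> sets M" unfolding s by measurable
    ultimately show ?thesis using m0 by (simp add: emeasure_eq_measure null_sets_def)
  qed
  then show "\<exists>U. open U \<and> x \<in> U \<and> {w\<in>space M. X t w \<in> U} \<in> null_sets M"
    using e(1) by (intro exI[of _ "ball x e"]) auto
qed
  then show ?thesis by simp
qed

lemma block_in_BS:
  assumes r: "r \<ge> 1"
  shows "\<exists>N\<in>null_sets M. {w\<in>space M. (\<lambda>i. if i < r then X (int i + 1) w else 0) \<notin> block_support M X r} \<subseteq> N"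
proof -
  define Bk where "Bk w = (\<lambda>i. if i < r then X (int i + 1) w else 0)" for w
  have "\<exists>N\<in>null_sets M. {w\<in>space M. Bk w \<in> {z. (\<forall>i\<ge>r. z i = 0) \<and> z \<notin> block_support M X r}} \<subseteq> N"
  proof (rule null_cover)
    fix z assume z: "z \<in> {z. (\<forall>i\<ge>r. z i = 0) \<and> z \<notin> block_support M X r}"
    then obtain e where e: "e > 0" "\<not> measure M {w\<in>space M. block_dist X r z w < e} > 0"
      unfolding block_support_def by auto
    define c where "c = e / real r"
    have c: "c > 0" using e r by (simp add: c_def)
    define U where "U = (\<Inter>i\<in>{..<r}. {v::nat\<Rightarrow>'b. dist (v i) (z i) < c})"
    have "open U" unfolding U_def
    proof (intro open_INT ballI)
      fix i
      have "continuous_on UNIV (\<lambda>v::nat\<Rightarrow>'b. dist (v i) (z i))"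
        by (intro continuous_intros continuous_on_compose2[OF _ continuous_on_product_coordinates]) auto
      then show "open {v::nat\<Rightarrow>'b. dist (v i) (z i) < c}"
        by (intro open_Collect_less) auto
    qed simp
    moreover have "z \<in> U" using c unfolding U_def by simp
    moreover have "{w\<in>space M. Bk w \<in> U} \<in> null_sets M"
    proof -
      have eq: "{w\<in>space M. Bk w \<in> U} = {w\<in>space M. \<forall>i\<in>{..<r}. dist (X (int i + 1) w) (z i) < c}"
        unfolding U_def Bk_def by auto
      have meas: "{w\<in>space M. \<forall>i\<in>{..<r}. dist (X (int i + 1) w) (z i) < c} \<in> sets M"
        by measurable
      have sub: "{w\<in>space M. \<forall>i\<in>{..<r}. dist (X (int i + 1) w) (z i) < c} \<subseteq> {w\<in>space M. block_dist X r z w < e}"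
      proof safe
        fix w assume w: "w \<in> space M" "\<forall>i\<in>{..<r}. dist (X (int i + 1) w) (z i) < c"
        have "block_dist X r z w = L2_set (\<lambda>i. norm (X (int i + 1) w - z i)) {..<r}"
          unfolding block_dist_def L2_set_def by simp
        also have "\<dots> \<le> (\<Sum>i<r. norm (X (int i + 1) w - z i))"
          by (rule L2_set_le_sum) auto
        also have "\<dots> < (\<Sum>i<r. c)"
          proof (rule sum_strict_mono)
          have "0 \<in> {..<r}" using r by simp
          then show "{..<r} \<noteq> {}" by blast
        qed (use w in \<open>auto simp: dist_norm\<close>)
        also have "\<dots> = e" using r by (simp add: c_def)
        finally show "block_dist X r z w < e" .
      qed
      have m2: "{w\<in>space M. block_dist X r z w < e} \<in> sets M"
        unfolding block_dist_bd by measurable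
      have "measure M {w\<in>space M. \<forall>i\<in>{..<r}. dist (X (int i + 1) w) (z i) < c} \<le> measure M {w\<in>space M. block_dist X r z w < e}"
        using sub m2 by (rule finite_measure_mono)
      then have "measure M {w\<in>space M. \<forall>i\<in>{..<r}. dist (X (int i + 1) w) (z i) < c} = 0"
        using e(2) by (simp add: measure_nonneg order.antisym)
      then show ?thesis using eq meas by (simp add: emeasure_eq_measure null_sets_def)
    qed
    ultimately show "\<exists>U. open U \<and> z \<in> U \<and> {w\<in>space M. Bk w \<in> U} \<in> null_sets M" by blast
  qed
  moreover have "{w\<in>space M. Bk w \<notin> block_support M X r} = {w\<in>space M. Bk w \<in> {z. (\<forall>i\<ge>r. z i = 0) \<and> z \<notin> block_support M X r}}"
    unfolding Bk_def by auto
  ultimately have "\<exists>N\<in>null_sets M. {w\<in>space M. Bk w \<notin> block_support M X r} \<subseteq> N"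
    by (simp only:)
  then show ?thesis unfolding Bk_def .
qed

lemma rho_le:
  assumes "x \<in> block_support M X r"
  shows "rho M X r c \<le> measure M {w\<in>space M. block_dist X r x w \<le> c}"
  unfolding rho_def using assms by (intro cINF_lower bdd_belowI2[where m=0]) auto

lemma L2_tri:
  "L2_set (\<lambda>i. norm (a i - b i)) A \<le> L2_set (\<lambda>i. norm (v i - a i)) A + L2_set (\<lambda>i. norm (v i - b i)) A"
proof -
  have "L2_set (\<lambda>i. norm (a i - b i)) A \<le> L2_set (\<lambda>i. norm (v i - a i) + norm (v i - b i)) A"
  proof (rule L2_set_mono)
    fix i
    show "norm (a i - b i) \<le> norm (v i - a i) + norm (v i - b i)"
      by (metis norm_diff_triangle_le norm_minus_commute order_refl)
  qed simp
  also have "\<dots> \<le> L2_set (\<lambda>i. norm (v i - a i)) A + L2_set (\<lambda>i. norm (v i - b i)) A"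
    by (rule L2_set_triangle_ineq)
  finally show ?thesis .
qed

lemma L2_sym: "L2_set (\<lambda>i. norm (a i - b i)) A = L2_set (\<lambda>i. norm (b i - a i)) A"
  by (intro L2_set_cong) (auto simp: norm_minus_commute)

lemma covering:
  assumes d: "d > 0" and rp: "rho M X r d > 0"
  shows "\<exists>C. finite C \<and> C \<subseteq> block_support M X r \<and> real (card C) * rho M X r d \<le> 1 \<and>
           (\<forall>z\<in>block_support M X r. \<exists>c\<in>C. L2_set (\<lambda>i. norm (z i - c i)) {..<r} \<le> 2 * d)"
proof -
  define BS where "BS = block_support M X r"
  define \<rho> where "\<rho> = rho M X r d"
  define sep where "sep C \<longleftrightarrow> finite C \<and> C \<subseteq> BS \<and>
     (\<forall>a\<in>C. \<forall>b\<in>C. a \<noteq> b \<longrightarrow> L2_set (\<lambda>i. norm (a i - b i)) {..<r} > 2 * d)" for C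
  have cardb: "real (card C) * \<rho> \<le> 1" if "sep C" for C
  proof -
    define E where "E c = {w\<in>space M. block_dist X r c w \<le> d}" for c
    have Em: "E c \<in> sets M" for c unfolding E_def block_dist_bd by measurable
    have disj: "disjoint_family_on E C"
      unfolding disjoint_family_on_def
    proof (intro ballI impI)
      fix a b assume ab: "a \<in> C" "b \<in> C" "a \<noteq> b"
      show "E a \<inter> E b = {}"
      proof (rule ccontr)
        assume "E a \<inter> E b \<noteq> {}"
        then obtain w where w: "w \<in> E a" "w \<in> E b" by blast
        define v where "v i = X (int i + 1) w" for i
        have "block_dist X r a w = L2_set (\<lambda>i. norm (v i - a i)) {..<r}"
             "block_dist X r b w = L2_set (\<lambda>i. norm (v i - b i)) {..<r}"
          unfolding block_dist_def L2_set_def v_def by simp_all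
        then have "L2_set (\<lambda>i. norm (a i - b i)) {..<r} \<le> 2 * d"
          using L2_tri[where a=a and b=b and v=v and A="{..<r}"] w unfolding E_def by simp
        moreover have "L2_set (\<lambda>i. norm (a i - b i)) {..<r} > 2 * d" using that ab unfolding sep_def by blast
        ultimately show False by linarith
      qed
    qed
    have fin: "finite C" using that unfolding sep_def by simp
    have "real (card C) * \<rho> = (\<Sum>c\<in>C. \<rho>)" by simp
    also have "\<dots> \<le> (\<Sum>c\<in>C. measure M (E c))"
    proof (rule sum_mono)
      fix c assume "c \<in> C"
      then have "c \<in> block_support M X r" using that unfolding sep_def BS_def by blast
      then show "\<rho> \<le> measure M (E c)" unfolding \<rho>_def E_def by (rule rho_le)
    qed
    also have "\<dots> = measure M (\<Union>c\<in>C. E c)"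
      using fin Em disj by (intro finite_measure_finite_Union[symmetric]) auto
    also have "\<dots> \<le> 1" by (rule prob_le_1)
    finally show ?thesis .
  qed
  have bnd: "card C \<le> nat \<lceil>1 / \<rho>\<rceil>" if "sep C" for C
  proof -
    have rp': "\<rho> > 0" using rp unfolding \<rho>_def .
    have "real (card C) \<le> 1 / \<rho>" using cardb[OF that] rp' by (simp add: pos_le_divide_eq)
    then have "real (card C) \<le> real_of_int \<lceil>1 / \<rho>\<rceil>" by (meson le_of_int_ceiling order_trans)
    then show ?thesis by linarith
  qed
  define P where "P n \<longleftrightarrow> (\<exists>C. sep C \<and> card C = n)" for n
  have "sep {}" unfolding sep_def by simp
  then have P0: "P 0" unfolding P_def by (intro exI[of _ "{}"]) simp
  have Pb: "\<And>n. P n \<Longrightarrow> n \<le> nat \<lceil>1 / \<rho>\<rceil>" unfolding P_def using bnd by blast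
  obtain n where n: "P n" and nmax: "\<And>m. P m \<Longrightarrow> m \<le> n"
    using Nat.ex_has_greatest_nat[of P 0 "nat \<lceil>1 / \<rho>\<rceil>"] P0 Pb by metis
  obtain C where C: "sep C" "card C = n" using n unfolding P_def by blast
  have cover: "\<exists>c\<in>C. L2_set (\<lambda>i. norm (z i - c i)) {..<r} \<le> 2 * d" if z: "z \<in> BS" for z
  proof (rule ccontr)
    assume "\<not> ?thesis"
    then have far: "\<forall>c\<in>C. L2_set (\<lambda>i. norm (z i - c i)) {..<r} > 2 * d" by force
    have zC: "z \<notin> C"
    proof
      assume "z \<in> C"
      then have "L2_set (\<lambda>i. norm (z i - z i)) {..<r} > 2 * d" using far by blast
      then show False using d by (simp add: L2_set_def)
    qed
    have "sep (insert z C)"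
      unfolding sep_def
    proof (intro conjI ballI impI)
      show "finite (insert z C)" using C unfolding sep_def by simp
      show "insert z C \<subseteq> BS" using C z unfolding sep_def by simp
      fix a b assume ab: "a \<in> insert z C" "b \<in> insert z C" "a \<noteq> b"
      then consider "a = z" "b \<in> C" | "b = z" "a \<in> C" | "a \<in> C" "b \<in> C" by blast
      then show "L2_set (\<lambda>i. norm (a i - b i)) {..<r} > 2 * d"
      proof cases
        case 1 then show ?thesis using far by blast
      next
        case 2
        then have "L2_set (\<lambda>i. norm (z i - a i)) {..<r} > 2 * d" using far by blast
        then show ?thesis using L2_sym[where a=a and b=b and A="{..<r}"] 2 by simp
      next
        case 3 then show ?thesis using C ab unfolding sep_def by blast
      qed
    qed
    then have "card (insert z C) \<le> n" using nmax unfolding P_def by blast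
    moreover have "card (insert z C) = n + 1" using C zC unfolding sep_def by simp
    ultimately show False by simp
  qed
  show ?thesis
  proof (intro exI[of _ C] conjI ballI)
    show "finite C" "C \<subseteq> block_support M X r" using C(1) unfolding sep_def BS_def by auto
    show "real (card C) * rho M X r d \<le> 1" using cardb[OF C(1)] unfolding \<rho>_def .
    fix z assume "z \<in> block_support M X r"
    then show "\<exists>c\<in>C. L2_set (\<lambda>i. norm (z i - c i)) {..<r} \<le> 2 * d" using cover unfolding BS_def by blast
  qed
qed

lemma dep_step:
  assumes r: "r \<ge> 1" and m: "m \<ge> 1"
  shows "measure M {w\<in>space M. \<forall>q<Suc m. bd (2*q*r) r y w > h}
    \<le> measure M {w\<in>space M. \<forall>q<m. bd (2*q*r) r y w > h} * measure M {w\<in>space M. bd 0 r y w > h} + \<Psi> r"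
proof -
  define E1 where "E1 = {w\<in>space M. \<forall>q<m. bd (2*q*r) r y w > h}"
  define E2 where "E2 = {w\<in>space M. bd (2*m*r) r y w > h}"
  define E12 where "E12 = {w\<in>space M. \<forall>q<Suc m. bd (2*q*r) r y w > h}"
  have E12: "E12 = E1 \<inter> E2" unfolding E1_def E2_def E12_def by (auto simp: less_Suc_eq)
  have E1m: "E1 \<in> sets M" unfolding E1_def by measurable
  have E2m: "E2 \<in> sets M" unfolding E2_def by measurable
  have pE2: "measure M E2 = measure M {w\<in>space M. bd 0 r y w > h}"
    unfolding E2_def by (rule stat_bd(2))
  have nn: "0 \<le> measure M E1 * measure M E2 + \<Psi> r" using Psi_nonneg by simp
  show ?thesis
  proof (cases "E12 = {}")
    case True
    then have "measure M E12 = 0" by simp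
    then show ?thesis using nn pE2 unfolding E12_def E1_def by simp
  next
    case False
    then obtain w0 where w0: "w0 \<in> E12" by blast
    define K where "K = m * r"
    define ia where "ia a = int (a + (a div r) * r) + 1" for a
    define ja where "ja a = int (2*m*r + a) + 1" for a
    define f where "f z = (if \<forall>q\<in>{..<m}. L2_set (\<lambda>i. norm (z (q*r+i) - y i)) {..<r} > h then 1 else 0::real)" for z
    define g where "g z = (if L2_set (\<lambda>i. norm (z i - y i)) {..<r} > h then 1 else 0::real)" for z
    have idx: "(q*r+i) div r = q" "q*r + i < K" if "q < m" "i < r" for q i
    proof -
      show "(q*r+i) div r = q" using that by simp
      have "Suc q * r \<le> m * r" using that by (intro mult_le_mono1) simp
      then show "q*r + i < K" unfolding K_def using that by simp
    qed
    have F1: "f (\<lambda>a\<in>{..<K}. X (ia a) w) = indicator E1 w" if w: "w \<in> space M" for w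
    proof -
      have "L2_set (\<lambda>i. norm ((\<lambda>a\<in>{..<K}. X (ia a) w) (q*r+i) - y i)) {..<r} = bd (2*q*r) r y w" if q: "q < m" for q
        unfolding bd_def
      proof (rule L2_set_cong)
        fix i assume "i \<in> {..<r}"
        then have i: "i < r" by simp
        have "ia (q*r+i) = int (2*q*r + i) + 1" unfolding ia_def using idx(1)[OF q i] by simp
        then show "norm ((\<lambda>a\<in>{..<K}. X (ia a) w) (q*r+i) - y i) = norm (X (int (2*q*r + i) + 1) w - y i)"
          using idx(2)[OF q i] by simp
      qed simp
      then show ?thesis unfolding f_def E1_def using w by (auto simp: indicator_def)
    qed
    have F2: "g (\<lambda>a\<in>{..<r}. X (ja a) w) = indicator E2 w" if w: "w \<in> space M" for w
    proof -
      have "L2_set (\<lambda>i. norm ((\<lambda>a\<in>{..<r}. X (ja a) w) i - y i)) {..<r} = bd (2*m*r) r y w"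
        unfolding bd_def ja_def by (intro L2_set_cong) auto
      then show ?thesis unfolding g_def E2_def using w by (auto simp: indicator_def)
    qed
    have f01: "f z = 0 \<or> f z = 1" for z unfolding f_def by simp
    have g01: "g z = 0 \<or> g z = 1" for z unfolding g_def by simp
    have w0s: "w0 \<in> space M" "w0 \<in> E1" "w0 \<in> E2" using w0 E12 unfolding E12_def by auto
    have spK: "(\<lambda>a\<in>{..<K}. X (ia a) w0) \<in> space (PiM {..<K} (\<lambda>_. borel))" by (simp add: space_PiM)
    have spr: "(\<lambda>a\<in>{..<r}. X (ja a) w0) \<in> space (PiM {..<r} (\<lambda>_. borel))" by (simp add: space_PiM)
    have fnz: "\<exists>x\<in>space (PiM {..<K} (\<lambda>_. borel)). f x \<noteq> 0"
      using spK F1[OF w0s(1)] w0s(2) by force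
    have gnz: "\<exists>x\<in>space (PiM {..<r} (\<lambda>_. borel)). g x \<noteq> 0"
      using spr F2[OF w0s(1)] w0s(3) by force
    have sf: "sup_norm (PiM {..<K} (\<lambda>_. borel)) f = 1" using f01 fnz by (rule sup_norm_01)
    have sg: "sup_norm (PiM {..<r} (\<lambda>_. borel)) g = 1" using g01 gnz by (rule sup_norm_01)
    have fm: "f \<in> borel_measurable (PiM {..<K} (\<lambda>_. borel))"
      unfolding f_def K_def
    proof (rule measurable_If)
      have "{z \<in> space (PiM {..<m*r} (\<lambda>_. borel)). \<forall>q\<in>{..<m}. L2_set (\<lambda>i. norm (z (q*r+i) - y i)) {..<r} > h} \<in> sets (PiM {..<m*r} (\<lambda>_. borel))"
      proof (rule sets.sets_Collect_finite_All)
        fix q assume "q \<in> {..<m}"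
        then have "(\<lambda>z. L2_set (\<lambda>i. norm (z (q*r+i) - y i)) {..<r}) \<in> borel_measurable (PiM {..<m*r} (\<lambda>_. borel))"
          by (intro L2_block_meas) simp
        then show "{z \<in> space (PiM {..<m*r} (\<lambda>_. borel)). L2_set (\<lambda>i. norm (z (q*r+i) - y i)) {..<r} > h} \<in> sets (PiM {..<m*r} (\<lambda>_. borel))"
          by measurable
      qed simp
      then show "{z \<in> space (PiM {..<m*r} (\<lambda>_. borel)). \<forall>q\<in>{..<m}. L2_set (\<lambda>i. norm (z (q*r+i) - y i)) {..<r} > h} \<in> sets (PiM {..<m*r} (\<lambda>_. borel))" .
    qed simp_all
    have gm: "g \<in> borel_measurable (PiM {..<r} (\<lambda>_. borel))"
    proof -
      have "(\<lambda>z. L2_set (\<lambda>i. norm (z ((0::nat)*r+i) - y i)) {..<r}) \<in> borel_measurable (PiM {..<1*r} (\<lambda>_. borel))"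
        by (intro L2_block_meas) simp
      then have "(\<lambda>z. L2_set (\<lambda>i. norm (z i - y i)) {..<r}) \<in> borel_measurable (PiM {..<r} (\<lambda>_. borel))" by simp
      then show ?thesis unfolding g_def by measurable
    qed
    have fb: "bounded (f ` space (PiM {..<K} (\<lambda>_. borel)))"
      by (rule bounded_subset[OF finite_imp_bounded[of "{0,1}"]]) (use f01 in auto)
    have gb: "bounded (g ` space (PiM {..<r} (\<lambda>_. borel)))"
      by (rule bounded_subset[OF finite_imp_bounded[of "{0,1}"]]) (use g01 in auto)
    have Kr: "K \<ge> 1" unfolding K_def using r m by simp
    have iT: "\<forall>a<K. ia a \<in> T" "\<forall>a<r. ja a \<in> T" unfolding ia_def ja_def using T1 by auto
    have imono: "\<forall>a. Suc a < K \<longrightarrow> ia a \<le> ia (Suc a)"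
    proof (intro allI impI)
      fix a
      have "a div r \<le> Suc a div r" by (rule div_le_mono) simp
      then have "(a div r) * r \<le> (Suc a div r) * r" by (rule mult_le_mono1)
      then have "a + (a div r) * r \<le> Suc a + (Suc a div r) * r" by linarith
      then show "ia a \<le> ia (Suc a)" unfolding ia_def by linarith
    qed
    have jmono: "\<forall>a. Suc a < r \<longrightarrow> ja a \<le> ja (Suc a)" unfolding ja_def by simp
    have gap: "ia (K - 1) + int r \<le> ja 0"
    proof -
      have "(K - 1) div r < m" using Kr unfolding K_def by (intro less_mult_imp_div_less) simp
      then have "(K - 1) div r \<le> m - 1" by simp
      then have "((K - 1) div r) * r \<le> (m - 1) * r" by (rule mult_le_mono1)
      also have "\<dots> = K - r" unfolding K_def by (simp add: diff_mult_distrib)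
      finally have "((K - 1) div r) * r \<le> K - r" .
      moreover have "r \<le> K" unfolding K_def using m by simp
      ultimately have "(K - 1) + ((K - 1) div r) * r + r \<le> 2 * m * r" using Kr unfolding K_def by linarith
      then have "int ((K - 1) + ((K - 1) div r) * r + r) \<le> int (2 * m * r + 0)" by (simp only: of_nat_le_iff add_0_right)
      then show ?thesis unfolding ia_def ja_def by (simp only: of_nat_add)
    qed
    have wdr: "\<forall>(k::nat) (l::nat) (i::nat \<Rightarrow> int) (j::nat \<Rightarrow> int) (r::nat)
       (f::(nat \<Rightarrow> 'b) \<Rightarrow> real) (g::(nat \<Rightarrow> 'b) \<Rightarrow> real).
       k \<ge> 1 \<and> l \<ge> 1 \<and> r \<ge> 1 \<and>
       (\<forall>a<k. i a \<in> T) \<and> (\<forall>a<l. j a \<in> T) \<and>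
       (\<forall>a. Suc a < k \<longrightarrow> i a \<le> i (Suc a)) \<and>
       (\<forall>a. Suc a < l \<longrightarrow> j a \<le> j (Suc a)) \<and>
       i (k - 1) + int r \<le> j 0 \<and>
       f \<in> borel_measurable (PiM {..<k} (\<lambda>_. borel)) \<and>
       g \<in> borel_measurable (PiM {..<l} (\<lambda>_. borel)) \<and>
       bounded (f ` space (PiM {..<k} (\<lambda>_. borel))) \<and>
       bounded (g ` space (PiM {..<l} (\<lambda>_. borel))) \<and>
       (\<exists>x\<in>space (PiM {..<k} (\<lambda>_. borel)). f x \<noteq> 0) \<and>
       (\<exists>y\<in>space (PiM {..<l} (\<lambda>_. borel)). g y \<noteq> 0)
     \<longrightarrow>
       \<bar>cov M (\<lambda>w. f (\<lambda>a\<in>{..<k}. X (i a) w) / sup_norm (PiM {..<k} (\<lambda>_. borel)) f)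
               (\<lambda>w. g (\<lambda>a\<in>{..<l}. X (j a) w) / sup_norm (PiM {..<l} (\<lambda>_. borel)) g)\<bar>
       \<le> \<Psi> r"
      using wd unfolding weakly_dependent_on_def by blast
    have cb: "\<bar>cov M (\<lambda>w. f (\<lambda>a\<in>{..<K}. X (ia a) w) / sup_norm (PiM {..<K} (\<lambda>_. borel)) f)
               (\<lambda>w. g (\<lambda>a\<in>{..<r}. X (ja a) w) / sup_norm (PiM {..<r} (\<lambda>_. borel)) g)\<bar> \<le> \<Psi> r"
      using wdr[THEN spec[of _ K], THEN spec[of _ r], THEN spec[of _ ia], THEN spec[of _ ja], THEN spec[of _ r], THEN spec[of _ f], THEN spec[of _ g]]
        Kr r iT imono jmono gap fm gm fb gb fnz gnz by blast
    have cv: "cov M (\<lambda>w. f (\<lambda>a\<in>{..<K}. X (ia a) w) / sup_norm (PiM {..<K} (\<lambda>_. borel)) f)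
               (\<lambda>w. g (\<lambda>a\<in>{..<r}. X (ja a) w) / sup_norm (PiM {..<r} (\<lambda>_. borel)) g)
          = measure M E12 - measure M E1 * measure M E2"
    proof -
      have i1: "(\<integral>w. f (\<lambda>a\<in>{..<K}. X (ia a) w) / sup_norm (PiM {..<K} (\<lambda>_. borel)) f * (g (\<lambda>a\<in>{..<r}. X (ja a) w) / sup_norm (PiM {..<r} (\<lambda>_. borel)) g) \<partial>M)
          = (\<integral>w. indicator (E1 \<inter> E2) w \<partial>M)"
        by (intro Bochner_Integration.integral_cong) (auto simp: sf sg F1 F2 indicator_inter_arith)
      have i2: "(\<integral>w. f (\<lambda>a\<in>{..<K}. X (ia a) w) / sup_norm (PiM {..<K} (\<lambda>_. borel)) f \<partial>M) = (\<integral>w. indicator E1 w \<partial>M)"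
        by (intro Bochner_Integration.integral_cong) (auto simp: sf F1)
      have i3: "(\<integral>w. g (\<lambda>a\<in>{..<r}. X (ja a) w) / sup_norm (PiM {..<r} (\<lambda>_. borel)) g \<partial>M) = (\<integral>w. indicator E2 w \<partial>M)"
        by (intro Bochner_Integration.integral_cong) (auto simp: sg F2)
      have s1: "E1 \<inter> space M = E1" "E2 \<inter> space M = E2" "E1 \<inter> E2 \<inter> space M = E1 \<inter> E2"
        unfolding E1_def E2_def by auto
      show ?thesis unfolding cov_def i1 i2 i3 using s1 E12 by simp
    qed
    have "measure M E12 \<le> measure M E1 * measure M E2 + \<Psi> r" using cb cv by linarith
    then show ?thesis unfolding E12_def E1_def pE2[symmetric] E2_def .
  qed
qed

lemma dep_bound:
  assumes r: "r \<ge> 1"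
  shows "measure M {w\<in>space M. \<forall>q<m. bd (2*q*r) r y w > h}
    \<le> (measure M {w\<in>space M. bd 0 r y w > h}) ^ m + real m * \<Psi> r"
proof (induction m)
  case 0
  then show ?case by (simp add: prob_space)
next
  case (Suc m)
  define p where "p = measure M {w\<in>space M. bd 0 r y w > h}"
  have p: "0 \<le> p" "p \<le> 1" unfolding p_def by (simp_all add: measure_nonneg)
  have Ps: "\<Psi> r \<ge> 0" by (rule Psi_nonneg)
  show ?case
  proof (cases "m = 0")
    case True
    have "{w\<in>space M. \<forall>q<Suc 0. bd (2*q*r) r y w > h} = {w\<in>space M. bd 0 r y w > h}" by auto
    then show ?thesis using True Ps by (simp add: p_def)
  next
    case False
    have "measure M {w\<in>space M. \<forall>q<Suc m. bd (2*q*r) r y w > h}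
      \<le> measure M {w\<in>space M. \<forall>q<m. bd (2*q*r) r y w > h} * p + \<Psi> r"
      unfolding p_def using False r by (intro dep_step) auto
    also have "\<dots> \<le> (p ^ m + real m * \<Psi> r) * p + \<Psi> r"
      using Suc.IH p unfolding p_def[symmetric] by (intro add_right_mono mult_right_mono) auto
    also have "\<dots> = p ^ Suc m + real m * \<Psi> r * p + \<Psi> r" by (simp add: algebra_simps)
    also have "\<dots> \<le> p ^ Suc m + real m * \<Psi> r + \<Psi> r"
      using p Ps by (simp add: mult_left_le)
    finally show ?thesis unfolding p_def by (simp add: algebra_simps)
  qed
qed

lemma part1:
  assumes S: "rv_support M (X 1) = S" and cS: "compact S"
    and eps: "eps > 0" and k: "k \<ge> 1" and r: "r \<ge> 1" and kr: "k * r \<le> n"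
    and rp: "rho M X r (eps / 4) > 0"
  shows "measure M {w \<in> space M. hausdorff_dist (sample_set X n w) S > eps}
           \<le> (real k ^ 2 * \<Psi> r + real k * exp (- real (k div 2) * rho M X r (eps / 2)))
             / (real k * rho M X r (eps / 4))"
proof -
  define \<rho>4 where "\<rho>4 = rho M X r (eps / 4)"
  define \<rho>2 where "\<rho>2 = rho M X r (eps / 2)"
  define m where "m = k div 2"
  define BS where "BS = block_support M X r"
  obtain C where C: "finite C" "C \<subseteq> BS" "real (card C) * \<rho>4 \<le> 1"
    and Ccov: "\<And>z. z \<in> BS \<Longrightarrow> \<exists>c\<in>C. L2_set (\<lambda>i. norm (z i - c i)) {..<r} \<le> eps / 2"
    using covering[of "eps/4" r] eps rp unfolding \<rho>4_def BS_def by auto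
  have "\<forall>t\<in>{1..n}. \<exists>N. N \<in> null_sets M \<and> {w\<in>space M. X (int t) w \<notin> S} \<subseteq> N"
  proof
    fix t assume "t \<in> {1..n}"
    then have "int t \<ge> 1" by simp
    from X_in_S[OF this] show "\<exists>N. N \<in> null_sets M \<and> {w\<in>space M. X (int t) w \<notin> S} \<subseteq> N"
      unfolding S by blast
  qed
  from bchoice[OF this] obtain Nt where Nt': "\<forall>t\<in>{1..n}. Nt t \<in> null_sets M \<and> {w\<in>space M. X (int t) w \<notin> S} \<subseteq> Nt t"
    by blast
  have Nt: "Nt t \<in> null_sets M \<and> {w\<in>space M. X (int t) w \<notin> S} \<subseteq> Nt t" if "t \<in> {1..n}" for t
    using Nt' that by blast
  define N1 where "N1 = (\<Union>t\<in>{1..n}. Nt t)"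
  have N1: "N1 \<in> null_sets M" unfolding N1_def using Nt by (intro null_sets_UN') auto
  obtain N2 where N2: "N2 \<in> null_sets M"
    "{w\<in>space M. (\<lambda>i. if i < r then X (int i + 1) w else 0) \<notin> BS} \<subseteq> N2"
    using block_in_BS[OF r] unfolding BS_def by blast
  define A where "A c = {w\<in>space M. \<forall>q<m. bd (2*q*r) r c w > eps / 2}" for c
  have Am: "A c \<in> sets M" for c unfolding A_def by measurable
  have "1 * 1 \<le> k * r" using k r by (rule mult_le_mono)
  then have n1: "n \<ge> 1" using kr by linarith
  have bS: "bounded S" using cS by (rule compact_imp_bounded)
  then obtain B where B: "\<And>x. x \<in> S \<Longrightarrow> norm x \<le> B" unfolding bounded_iff by blast
  have incl: "{w \<in> space M. hausdorff_dist (sample_set X n w) S > eps} \<subseteq> N1 \<union> (\<Union>c\<in>C. A c)"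
  proof
    fix w assume w: "w \<in> {w \<in> space M. hausdorff_dist (sample_set X n w) S > eps}"
    show "w \<in> N1 \<union> (\<Union>c\<in>C. A c)"
    proof (cases "w \<in> N1")
      case True then show ?thesis by blast
    next
      case False
      have ws: "w \<in> space M" using w by blast
      have inS: "X (int t) w \<in> S" if "t \<in> {1..n}" for t
        using False Nt[OF that] ws unfolding N1_def using that by blast
      define F where "F = sample_set X n w"
      have Fe: "F = (\<lambda>t. X (int t) w) ` {1..n}" unfolding F_def sample_set_def by auto
      have FS: "F \<subseteq> S" using inS unfolding Fe by auto
      have Fne: "F \<noteq> {}" using n1 unfolding Fe by auto
      have X1F: "X 1 w \<in> F" using n1 unfolding Fe by (auto intro!: image_eqI[of _ _ 1])
      have Sne: "S \<noteq> {}" using FS Fne by blast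
      have sup1: "(SUP x\<in>F. infdist x S) = 0"
      proof -
        have "(SUP x\<in>F. infdist x S) = (SUP x\<in>F. (0::real))"
          using FS by (intro SUP_cong) (auto simp: infdist_zero)
        then show ?thesis using Fne by simp
      qed
      have "hausdorff_dist F S > eps" using w unfolding F_def by blast
      then have "(SUP y\<in>S. infdist y F) > eps" unfolding hausdorff_dist_def sup1 using eps by linarith
      moreover have "bdd_above ((\<lambda>y. infdist y F) ` S)"
      proof (rule bdd_aboveI2)
        fix y assume "y \<in> S"
        have "infdist y F \<le> dist y (X 1 w)" using X1F by (rule infdist_le)
        also have "\<dots> \<le> norm y + norm (X 1 w)" by (simp add: dist_norm norm_triangle_ineq4)
        also have "\<dots> \<le> B + B" using B \<open>y \<in> S\<close> FS X1F by (intro add_mono) auto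
        finally show "infdist y F \<le> B + B" .
      qed
      ultimately obtain y where y: "y \<in> S" "infdist y F > eps" using less_cSUP_iff[OF Sne] by blast
      define \<eta> where "\<eta> = infdist y F - eps"
      have \<eta>: "\<eta> > 0" unfolding \<eta>_def using y by simp
      have G: "measure M {w\<in>space M. dist (X 1 w) y < \<eta>} > 0"
        using y(1) \<eta> unfolding S[symmetric] rv_support_def by blast
      obtain w0 where w0: "w0 \<in> space M" "dist (X 1 w0) y < \<eta>" "w0 \<notin> N2"
      proof (rule ccontr)
        assume "\<not> thesis"
        then have "{w\<in>space M. dist (X 1 w) y < \<eta>} \<subseteq> N2" using that by blast
        then have "measure M {w\<in>space M. dist (X 1 w) y < \<eta>} \<le> measure M N2"
          using N2(1) by (intro finite_measure_mono) auto
        also have "\<dots> = 0" using N2(1) by (simp add: measure_def null_setsD1)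
        finally show False using G by simp
      qed
      define z where "z = (\<lambda>i. if i < r then X (int i + 1) w0 else 0)"
      have zBS: "z \<in> BS" using w0 N2(2) unfolding z_def by blast
      obtain c where c: "c \<in> C" "L2_set (\<lambda>i. norm (z i - c i)) {..<r} \<le> eps / 2"
        using Ccov[OF zBS] by blast
      have "w \<in> A c"
        unfolding A_def
      proof (intro CollectI conjI allI impI ws)
        fix q assume q: "q < m"
        show "bd (2*q*r) r c w > eps / 2"
        proof (rule ccontr)
          assume "\<not> bd (2*q*r) r c w > eps / 2"
          then have bdle: "bd (2*q*r) r c w \<le> eps / 2" by simp
          define v where "v i = X (int (2*q*r + i) + 1) w" for i
          have "L2_set (\<lambda>i. norm (v i - z i)) {..<r} \<le> L2_set (\<lambda>i. norm (c i - v i)) {..<r} + L2_set (\<lambda>i. norm (c i - z i)) {..<r}"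
            by (rule L2_tri)
          also have "\<dots> = bd (2*q*r) r c w + L2_set (\<lambda>i. norm (z i - c i)) {..<r}"
          proof -
            have "L2_set (\<lambda>i. norm (c i - v i)) {..<r} = L2_set (\<lambda>i. norm (v i - c i)) {..<r}" by (rule L2_sym)
            moreover have "L2_set (\<lambda>i. norm (c i - z i)) {..<r} = L2_set (\<lambda>i. norm (z i - c i)) {..<r}" by (rule L2_sym)
            moreover have "bd (2*q*r) r c w = L2_set (\<lambda>i. norm (v i - c i)) {..<r}" unfolding bd_def v_def ..
            ultimately show ?thesis by simp
          qed
          also have "\<dots> \<le> eps" using bdle c(2) by simp
          finally have L: "L2_set (\<lambda>i. norm (v i - z i)) {..<r} \<le> eps" .
          have "norm (v 0 - z 0) \<le> L2_set (\<lambda>i. norm (v i - z i)) {..<r}"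
            using r by (intro member_le_L2_set) auto
          then have d0: "dist (v 0) (X 1 w0) \<le> eps" using L r unfolding z_def by (simp add: dist_norm)
          have tF: "v 0 \<in> F"
          proof -
            have "2 * q + 2 \<le> k" using q unfolding m_def by linarith
            then have "(2 * q + 1) * r \<le> k * r" by (intro mult_le_mono1) simp
            then have "2*q*r + 1 \<le> n" using kr r by (simp add: algebra_simps) 
            then have "2*q*r + 1 \<in> {1..n}" by simp
            moreover have "v 0 = X (int (2*q*r + 1)) w" unfolding v_def by (simp add: add.commute)
            ultimately show ?thesis unfolding Fe by blast
          qed
          have "dist y (v 0) \<le> dist y (X 1 w0) + dist (X 1 w0) (v 0)" by (rule dist_triangle)
          also have "\<dots> < \<eta> + eps" using w0(2) d0 by (simp add: dist_commute)
          finally have "dist y (v 0) < infdist y F" unfolding \<eta>_def by simp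
          moreover have "infdist y F \<le> dist y (v 0)" using tF by (rule infdist_le)
          ultimately show False by simp
        qed
      qed
      then show ?thesis using c(1) by blast
    qed
  qed
  have "measure M {w \<in> space M. hausdorff_dist (sample_set X n w) S > eps} \<le> measure M (N1 \<union> (\<Union>c\<in>C. A c))"
    using incl N1 Am C(1) by (intro finite_measure_mono) auto
  also have "\<dots> \<le> measure M N1 + measure M (\<Union>c\<in>C. A c)"
    using N1 Am C(1) by (intro measure_Un_le) auto
  also have "measure M N1 = 0" using N1 by (simp add: measure_def null_setsD1)
  also have "measure M (\<Union>c\<in>C. A c) \<le> (\<Sum>c\<in>C. measure M (A c))"
    using Am C(1) by (intro finite_measure_subadditive_finite) auto
  also have "\<dots> \<le> (\<Sum>c\<in>C. exp (- real m * \<rho>2) + real k * \<Psi> r)"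
  proof (rule sum_mono)
    fix c assume cC: "c \<in> C"
    define p where "p = measure M {w\<in>space M. bd 0 r c w > eps / 2}"
    have Ac: "measure M (A c) \<le> p ^ m + real m * \<Psi> r" unfolding A_def p_def by (rule dep_bound[OF r])
    have "p = 1 - measure M {w\<in>space M. bd 0 r c w \<le> eps / 2}"
    proof -
      have "{w\<in>space M. bd 0 r c w > eps / 2} = space M - {w\<in>space M. bd 0 r c w \<le> eps / 2}" by auto
      moreover have "{w\<in>space M. bd 0 r c w \<le> eps / 2} \<in> sets M" by measurable
      ultimately show ?thesis unfolding p_def using prob_compl by simp
    qed
    moreover have "\<rho>2 \<le> measure M {w\<in>space M. bd 0 r c w \<le> eps / 2}"
      using rho_le[of c r "eps/2"] cC C(2) unfolding \<rho>2_def BS_def block_dist_bd by blast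
    moreover have "p \<ge> 0" unfolding p_def by simp
    ultimately have p1: "0 \<le> p" "p \<le> 1 - \<rho>2" by linarith+
    have "p ^ m \<le> (1 - \<rho>2) ^ m" using p1 by (intro power_mono) auto
    also have "\<dots> \<le> exp (- \<rho>2) ^ m"
    proof (rule power_mono)
      show "1 - \<rho>2 \<le> exp (- \<rho>2)" using exp_ge_add_one_self[of "- \<rho>2"] by simp
      show "0 \<le> 1 - \<rho>2" using p1 by simp
    qed
    also have "\<dots> = exp (- real m * \<rho>2)" by (simp add: exp_of_nat_mult[symmetric])
    finally have "p ^ m \<le> exp (- real m * \<rho>2)" .
    moreover have "real m * \<Psi> r \<le> real k * \<Psi> r"
      using Psi_nonneg unfolding m_def by (intro mult_right_mono) auto
    ultimately show "measure M (A c) \<le> exp (- real m * \<rho>2) + real k * \<Psi> r" using Ac by linarith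
  qed
  also have "\<dots> = real (card C) * (exp (- real m * \<rho>2) + real k * \<Psi> r)" by simp
  also have "\<dots> \<le> (exp (- real m * \<rho>2) + real k * \<Psi> r) / \<rho>4"
  proof -
    have nn: "0 \<le> exp (- real m * \<rho>2) + real k * \<Psi> r" using Psi_nonneg by (simp add: add_nonneg_nonneg)
    have "real (card C) \<le> 1 / \<rho>4" using C(3) rp unfolding \<rho>4_def by (simp add: pos_le_divide_eq)
    then have "real (card C) * (exp (- real m * \<rho>2) + real k * \<Psi> r) \<le> 1 / \<rho>4 * (exp (- real m * \<rho>2) + real k * \<Psi> r)"
      using nn by (rule mult_right_mono)
    then show ?thesis by simp
  qed
  also have "\<dots> = (real k ^ 2 * \<Psi> r + real k * exp (- real (k div 2) * rho M X r (eps / 2))) / (real k * rho M X r (eps / 4))"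
  proof -
    have k0: "real k \<noteq> 0" using k by simp
    have r0: "rho M X r (eps / 4) \<noteq> 0" using rp by simp
    show ?thesis unfolding \<rho>4_def \<rho>2_def m_def using k0 r0
      by (simp add: field_simps power2_eq_square)
  qed
  finally show ?thesis by simp
qed

lemma sample_set_eq: "sample_set X n w = (\<lambda>j. X (int j + 1) w) ` {..<n}"
proof -
  have "sample_set X n w = (\<lambda>t. X (int t) w) ` {1..n}" unfolding sample_set_def by auto
  also have "{1..n} = Suc ` {..<n}" by (simp add: lessThan_atLeast0 image_Suc_atLeastLessThan atLeastLessThanSuc_atLeastAtMost)
  finally show ?thesis by (simp add: image_image add.commute)
qed

lemma haus_meas:
  assumes cS: "compact S" and n: "n \<ge> 1"
  shows "{w\<in>space M. hausdorff_dist (sample_set X n w) S \<le> eps} \<in> sets M"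
proof (cases "S = {}")
  case True
  have "hausdorff_dist (sample_set X n w) S = max 0 (Sup ({}::real set))" for w
  proof -
    have "0 \<in> {..<n}" using n by simp
    then have ne: "sample_set X n w \<noteq> {}" unfolding sample_set_eq by blast
    have "(SUP x\<in>sample_set X n w. infdist x S) = (SUP x\<in>sample_set X n w. (0::real))"
      using True by (intro SUP_cong) (auto simp: infdist_def)
    then show ?thesis unfolding hausdorff_dist_def using True ne by simp
  qed
  then show ?thesis by simp
next
  case False
  obtain D where D: "countable D" "D \<subseteq> S" "S \<subseteq> closure D" using separable by blast
  have eq: "{w\<in>space M. hausdorff_dist (sample_set X n w) S \<le> eps} =
    {w\<in>space M. (\<forall>j\<in>{..<n}. infdist (X (int j + 1) w) S \<le> eps) \<and> (\<forall>y\<in>D. \<exists>j\<in>{..<n}. dist y (X (int j + 1) w) \<le> eps)}"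
  proof -
    have "hausdorff_dist (sample_set X n w) S \<le> eps \<longleftrightarrow>
      (\<forall>j\<in>{..<n}. infdist (X (int j + 1) w) S \<le> eps) \<and> (\<forall>y\<in>D. \<exists>j\<in>{..<n}. dist y (X (int j + 1) w) \<le> eps)" for w
    proof -
      have "0 \<in> {..<n}" using n by simp
      then have fin: "finite (sample_set X n w)" "sample_set X n w \<noteq> {}" unfolding sample_set_eq by auto
      show ?thesis unfolding haus_le_iff[OF fin cS False D(2,3)] unfolding sample_set_eq by auto
    qed
    then show ?thesis by auto
  qed
  have m1: "{w\<in>space M. \<forall>j\<in>{..<n}. infdist (X (int j + 1) w) S \<le> eps} \<in> sets M"
  proof -
    have "(\<lambda>x. infdist x S) \<in> borel_measurable borel"
      by (intro borel_measurable_continuous_onI continuous_on_infdist continuous_on_id)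
    then have [measurable]: "(\<lambda>w. infdist (X (int j + 1) w) S) \<in> borel_measurable M" for j
      by (rule measurable_compose[OF Xm])
    show ?thesis by measurable
  qed
  have m2: "{w\<in>space M. \<forall>y\<in>D. \<exists>j\<in>{..<n}. dist y (X (int j + 1) w) \<le> eps} \<in> sets M"
    by (rule sets.sets_Collect_countable_All'[OF _ D(1)]) measurable
  show ?thesis unfolding eq using m1 m2 by (simp add: sets.sets_Collect_conj)
qed

end

lemma asym_arith:
  fixes K Mh a c E Q P r \<Psi> \<alpha> :: real
  assumes K: "K > 0" "K \<le> 4 * E" and Mh: "Mh \<ge> E"
    and E: "E \<ge> 1" and a: "a \<ge> Q / E" and c: "c \<ge> Q / E"
    and Q: "Q = r * P" "P \<ge> r" "r \<ge> 1" "P \<ge> 1"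
    and Ps: "\<Psi> \<ge> 0" and h3: "E * E / (r * r) * \<Psi> < \<alpha> / 8"
    and h4: "exp (1 - r) \<le> \<alpha> / 2" and EP: "E = exp P"
  shows "(K^2 * \<Psi> + K * exp (- Mh * c)) / (K * a) \<le> \<alpha>"
proof -
  have Qp: "Q \<ge> r * r" using Q by (simp add: mult_left_mono)
  have "1 * 1 \<le> r * r" using Q(3) by (intro mult_mono) auto
  then have Q1: "Q \<ge> 1" using Qp by simp
  have QE: "Q / E > 0" using Q1 E by simp
  have a0: "a > 0" using a QE by linarith
  have c0: "c \<ge> 0" using c QE by linarith
  have "0 < a * (Q / E)" using a0 QE by (rule mult_pos_pos)
  then have "1 / a \<le> 1 / (Q / E)" using a by (intro divide_left_mono) auto
  then have ia: "1 / a \<le> E / Q" by simp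
  have split: "(K^2 * \<Psi> + K * exp (- Mh * c)) / (K * a) = K * \<Psi> * (1 / a) + exp (- Mh * c) * (1 / a)"
    using K a0 by (simp add: field_simps power2_eq_square)
  have A: "K * \<Psi> * (1 / a) \<le> \<alpha> / 2"
  proof -
    have "K * \<Psi> * (1 / a) \<le> (4 * E) * \<Psi> * (E / Q)"
      using K Ps ia a0 by (intro mult_mono) auto
    also have "\<dots> \<le> (4 * E) * \<Psi> * (E / (r * r))"
    proof -
      have "0 < Q * (r * r)" using Q1 Q(3) by simp
      then show ?thesis using Ps E Qp by (intro mult_left_mono divide_left_mono) auto
    qed
    also have "\<dots> = 4 * (E * E / (r * r) * \<Psi>)" by simp
    also have "\<dots> \<le> \<alpha> / 2" using h3 by linarith
    finally show ?thesis .
  qed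
  have B: "exp (- Mh * c) * (1 / a) \<le> \<alpha> / 2"
  proof -
    have "Mh * c \<ge> E * (Q / E)" using Mh c E c0 QE by (intro mult_mono) auto
    then have "Mh * c \<ge> Q" using E by simp
    then have "exp (- Mh * c) \<le> exp (- Q)" by simp
    then have "exp (- Mh * c) * (1 / a) \<le> exp (- Q) * (E / Q)"
      using ia a0 by (intro mult_mono) auto
    also have "\<dots> \<le> exp (- Q) * E"
      using Q1 E by (intro mult_left_mono) (auto simp: divide_le_eq)
    also have "\<dots> = exp (P - Q)" using EP by (simp add: exp_diff exp_minus field_simps)
    also have "\<dots> \<le> exp (1 - r)"
    proof -
      have "P - Q = (1 - r) * P" using Q by (simp add: algebra_simps)
      also have "\<dots> \<le> (1 - r) * 1" using Q by (intro mult_left_mono_neg) auto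
      finally show ?thesis by simp
    qed
    also have "\<dots> \<le> \<alpha> / 2" by (rule h4)
    finally show ?thesis .
  qed
  show ?thesis unfolding split using A B by linarith
qed
lemma asym:
  fixes \<rho>4 \<rho>2 \<Psi> :: "nat \<Rightarrow> real" and b \<alpha> :: real
  assumes b: "b > 1" and \<alpha>: "\<alpha> > 0"
    and H4: "filterlim (\<lambda>m::nat. \<rho>4 m * exp (real m powr b) / real m powr (1 + b)) at_top sequentially"
    and H2: "filterlim (\<lambda>m::nat. \<rho>2 m * exp (real m powr b) / real m powr (1 + b)) at_top sequentially"
    and HP: "(\<lambda>m::nat. exp (2 * real m powr b) / (real m)\<^sup>2 * \<Psi> m) \<longlonglongrightarrow> 0"
    and Ps: "\<And>m. \<Psi> m \<ge> 0"
  shows "\<exists>k r. k \<ge> 1 \<and> r \<ge> 1 \<and> \<rho>4 r > 0 \<and>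
     (real k ^ 2 * \<Psi> r + real k * exp (- real (k div 2) * \<rho>2 r)) / (real k * \<rho>4 r) \<le> \<alpha>"
proof -
  define c0 where "c0 = max 1 (1 - ln (\<alpha> / 2))"
  have e1: "eventually (\<lambda>m. 1 \<le> \<rho>4 m * exp (real m powr b) / real m powr (1 + b)) sequentially"
    using H4 unfolding filterlim_at_top by blast
  have e2: "eventually (\<lambda>m. 1 \<le> \<rho>2 m * exp (real m powr b) / real m powr (1 + b)) sequentially"
    using H2 unfolding filterlim_at_top by blast
  have e3: "eventually (\<lambda>m. exp (2 * real m powr b) / (real m)\<^sup>2 * \<Psi> m < \<alpha> / 8) sequentially"
    using HP \<alpha> by (intro order_tendstoD(2)) auto
  have e4: "eventually (\<lambda>m. real m \<ge> c0) sequentially"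
  proof -
    have "eventually (\<lambda>m. m \<ge> nat \<lceil>c0\<rceil>) sequentially" by (rule eventually_ge_at_top)
    then show ?thesis by eventually_elim linarith
  qed
  have "eventually (\<lambda>m. (1 \<le> \<rho>4 m * exp (real m powr b) / real m powr (1 + b)) \<and>
     (1 \<le> \<rho>2 m * exp (real m powr b) / real m powr (1 + b)) \<and>
     (exp (2 * real m powr b) / (real m)\<^sup>2 * \<Psi> m < \<alpha> / 8) \<and> real m \<ge> c0) sequentially"
    using e1 e2 e3 e4 by (intro eventually_conj)
  then obtain r where r1: "1 \<le> \<rho>4 r * exp (real r powr b) / real r powr (1 + b)"
    and r2: "1 \<le> \<rho>2 r * exp (real r powr b) / real r powr (1 + b)"
    and r3: "exp (2 * real r powr b) / (real r)\<^sup>2 * \<Psi> r < \<alpha> / 8" and r4: "real r \<ge> c0"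
    unfolding eventually_sequentially by blast
  define rr where "rr = real r"
  have rr1: "rr \<ge> 1" using r4 unfolding rr_def c0_def by simp
  have r1n: "r \<ge> 1" using rr1 unfolding rr_def by simp
  define P where "P = rr powr b"
  define Q where "Q = rr powr (1 + b)"
  define E where "E = exp P"
  have PR: "P \<ge> rr" unfolding P_def using rr1 b powr_mono[of 1 b rr] by simp
  have P1: "P \<ge> 1" using PR rr1 by simp
  have QP: "Q = rr * P" unfolding Q_def P_def using rr1 by (simp add: powr_add)
  have Q0: "Q > 0" using QP rr1 P1 by simp
  have E1: "E \<ge> 1" unfolding E_def using P1 by simp
  have a: "\<rho>4 r \<ge> Q / E"
    using r1 Q0 E1 unfolding rr_def[symmetric] P_def[symmetric] Q_def[symmetric] E_def[symmetric]
    by (simp add: le_divide_eq divide_le_eq)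
  have c: "\<rho>2 r \<ge> Q / E"
    using r2 Q0 E1 unfolding rr_def[symmetric] P_def[symmetric] Q_def[symmetric] E_def[symmetric]
    by (simp add: le_divide_eq divide_le_eq)
  define k where "k = 2 * nat \<lceil>E\<rceil>"
  have kd: "k div 2 = nat \<lceil>E\<rceil>" unfolding k_def by simp
  have Mh: "real (k div 2) \<ge> E" unfolding kd using E1 by linarith
  have K1: "real k \<le> 4 * E" unfolding k_def using E1 by linarith
  have K0: "real k > 0" unfolding k_def using E1 by linarith
  have h3: "E * E / (rr * rr) * \<Psi> r < \<alpha> / 8"
  proof -
    have "exp (2 * real r powr b) = E * E" unfolding E_def P_def rr_def by (simp add: exp_add[symmetric])
    moreover have "(real r)\<^sup>2 = rr * rr" unfolding rr_def by (simp add: power2_eq_square)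
    ultimately show ?thesis using r3 by simp
  qed
  have h4: "exp (1 - rr) \<le> \<alpha> / 2"
  proof -
    have "1 - rr \<le> ln (\<alpha> / 2)" using r4 unfolding rr_def c0_def by simp
    then have "exp (1 - rr) \<le> exp (ln (\<alpha> / 2))" by simp
    then show ?thesis using \<alpha> by simp
  qed
  have "(real k ^ 2 * \<Psi> r + real k * exp (- real (k div 2) * \<rho>2 r)) / (real k * \<rho>4 r) \<le> \<alpha>"
    using asym_arith[OF K0 K1 Mh E1 a c QP PR rr1 P1 Ps h3 h4 E_def] .
  moreover have "\<rho>4 r > 0" using a Q0 E1 by (smt (verit) divide_pos_pos)
  moreover have "k \<ge> 1" using K0 by simp
  ultimately show ?thesis using r1n by blast
qed

theorem proposition4p4:
  fixes M :: "'w measure" and X :: "int \<Rightarrow> 'w \<Rightarrow> 'b::euclidean_space"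
    and T :: "int set" and \<Psi> :: "nat \<Rightarrow> real" and S :: "'b set"
  assumes "prob_space M"
    and "T = UNIV \<or> T = {0..} \<or> T = {1..}"
    and "\<And>t. t \<in> T \<Longrightarrow> X t \<in> borel_measurable M"
    and "stationary_on M T X"
    and "weakly_dependent_on M T X \<Psi>"
    and "compact S"
    and "rv_support M (X 1) = S"
  shows "(\<forall>eps>0. \<forall>(n::nat) (k::nat) (r::nat). k \<ge> 1 \<and> r \<ge> 1 \<and> k * r \<le> n \<and> rho M X r (eps / 4) > 0 \<longrightarrow>
           measure M {w \<in> space M. hausdorff_dist (sample_set X n w) S > eps}
           \<le> (real k ^ 2 * \<Psi> r + real k * exp (- real (k div 2) * rho M X r (eps / 2)))
             / (real k * rho M X r (eps / 4)))
    \<and> ((\<exists>b>1. \<exists>e0>0.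
            (\<forall>eps. 0 < eps \<and> eps < e0 \<longrightarrow>
               filterlim (\<lambda>m::nat. rho M X m eps * exp (real m powr b) / real m powr (1 + b)) at_top sequentially)
            \<and> ((\<lambda>m::nat. exp (2 * real m powr b) / (real m)\<^sup>2 * \<Psi> m) \<longlonglongrightarrow> 0))
         \<longrightarrow> asymp_dense M X S)"
proof -
  have T1: "t \<in> T" if "t \<ge> 1" for t using assms(2) that by auto
  interpret prob_space M by (rule assms(1))
  interpret wsetting M X T \<Psi>
  proof
    show "\<And>t. 1 \<le> t \<Longrightarrow> t \<in> T" by (rule T1)
    show "\<And>t. t \<in> T \<Longrightarrow> random_variable borel (X t)" by (rule assms(3))
    show "stationary_on M T X" by (rule assms(4))
    show "weakly_dependent_on M T X \<Psi>" by (rule assms(5))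
  qed
  have P1: "measure M {w \<in> space M. hausdorff_dist (sample_set X n w) S > eps}
           \<le> (real k ^ 2 * \<Psi> r + real k * exp (- real (k div 2) * rho M X r (eps / 2)))
             / (real k * rho M X r (eps / 4))"
    if "eps > 0" "k \<ge> 1" "r \<ge> 1" "k * r \<le> n" "rho M X r (eps / 4) > 0" for eps n k r
    using part1[OF assms(7,6) that] .
  show ?thesis
  proof (intro conjI allI impI)
    fix eps :: real and n k r :: nat
    assume "eps > 0" "k \<ge> 1 \<and> r \<ge> 1 \<and> k * r \<le> n \<and> rho M X r (eps / 4) > 0"
    then show "measure M {w \<in> space M. hausdorff_dist (sample_set X n w) S > eps}
           \<le> (real k ^ 2 * \<Psi> r + real k * exp (- real (k div 2) * rho M X r (eps / 2)))
             / (real k * rho M X r (eps / 4))" using P1 by blast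
  next
    assume "\<exists>b>1. \<exists>e0>0.
            (\<forall>eps. 0 < eps \<and> eps < e0 \<longrightarrow>
               filterlim (\<lambda>m::nat. rho M X m eps * exp (real m powr b) / real m powr (1 + b)) at_top sequentially)
            \<and> ((\<lambda>m::nat. exp (2 * real m powr b) / (real m)\<^sup>2 * \<Psi> m) \<longlonglongrightarrow> 0)"
    then obtain b e0 where b: "b > 1" and e0: "e0 > 0"
      and H: "\<And>eps. 0 < eps \<Longrightarrow> eps < e0 \<Longrightarrow>
               filterlim (\<lambda>m::nat. rho M X m eps * exp (real m powr b) / real m powr (1 + b)) at_top sequentially"
      and HP: "(\<lambda>m::nat. exp (2 * real m powr b) / (real m)\<^sup>2 * \<Psi> m) \<longlonglongrightarrow> 0"
      by blast
    show "asymp_dense M X S"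
      unfolding asymp_dense_def
    proof (intro exI[of _ e0] conjI allI impI e0)
      fix eps \<alpha> :: real
      assume eps: "0 < eps \<and> eps < e0" and \<alpha>: "0 < \<alpha> \<and> \<alpha> < 1"
      have H4: "filterlim (\<lambda>m::nat. rho M X m (eps/4) * exp (real m powr b) / real m powr (1 + b)) at_top sequentially"
        using eps by (intro H) auto
      have H2: "filterlim (\<lambda>m::nat. rho M X m (eps/2) * exp (real m powr b) / real m powr (1 + b)) at_top sequentially"
        using eps by (intro H) auto
      obtain k r where kr: "k \<ge> 1" "r \<ge> 1" "rho M X r (eps/4) > 0"
        "(real k ^ 2 * \<Psi> r + real k * exp (- real (k div 2) * rho M X r (eps/2))) / (real k * rho M X r (eps/4)) \<le> \<alpha>"
        using asym[OF b _ H4 H2 HP Psi_nonneg] \<alpha> by blast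
      show "\<exists>n0. \<forall>n\<ge>n0. measure M {w \<in> space M. hausdorff_dist (sample_set X n w) S \<le> eps} \<ge> 1 - \<alpha>"
      proof (intro exI[of _ "k * r"] allI impI)
        fix n assume n: "k * r \<le> n"
        have "1 * 1 \<le> k * r" by (rule mult_le_mono[OF kr(1) kr(2)])
        then have n1: "n \<ge> 1" using n by linarith
        have ms: "{w\<in>space M. hausdorff_dist (sample_set X n w) S \<le> eps} \<in> sets M"
          using haus_meas[OF assms(6) n1] .
        have "{w \<in> space M. hausdorff_dist (sample_set X n w) S > eps} = space M - {w\<in>space M. hausdorff_dist (sample_set X n w) S \<le> eps}"
          by auto
        then have "measure M {w \<in> space M. hausdorff_dist (sample_set X n w) S > eps} = 1 - measure M {w\<in>space M. hausdorff_dist (sample_set X n w) S \<le> eps}"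
          using prob_compl[OF ms] by simp
        moreover have "measure M {w \<in> space M. hausdorff_dist (sample_set X n w) S > eps} \<le> \<alpha>"
          using P1[of eps k r n] eps kr n by linarith
        ultimately show "measure M {w \<in> space M. hausdorff_dist (sample_set X n w) S \<le> eps} \<ge> 1 - \<alpha>" by linarith
      qed
    qed
  qed
qed

end
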